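(* Let $m\ge3$ and let $T\subset\mathcal M$ with $|T|=m-1$. Then $$R^{(\min)}_T\ \ge\ \frac1{m-2}\sum_{j\in T}H(X_{T\setminus\{j\}}|X_j).$$
   Context: Let $\mathcal M=\{1,\dots,m\}$, and let $X_{\mathcal M}$ be jointly distributed finite-valued random variables, with $X_A=(X_i:i\in A)$. For $T\subset\mathcal M$, let $$\mathcal R_T=\Big\{(R_i:i\in T):\ \sum_{i\in B\cap T}R_i\ge H(X_{B\cap T}|X_{B^c})\ \text{ for all } B\subsetneq\mathcal M \text{ with } B\cap T\neq\emptyset\Big\},$$ and let $R^{(\min)}_T=\min_{(R_i)\in\mathcal R_T}\sum_{i\in T}R_i$. *)

theory Defs
  imports "HOL-Probability.Probability"
begin

text \<open>The joint distribution of X_1,...,X_m is a pmf P on tuples x :: nat => 'a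
  (component i is the value of X_i); finite-valuedness = finite support.
  X_A is the restriction of the tuple to A.\<close>

definition cond_entropy :: "(nat \<Rightarrow> 'a) pmf \<Rightarrow> nat set \<Rightarrow> nat set \<Rightarrow> real" where
  "cond_entropy P A B =
     (let Q = map_pmf (\<lambda>x. (restrict x A, restrict x B)) P;
          QB = map_pmf snd Q
      in - (\<Sum>ab\<in>set_pmf Q. pmf Q ab * log 2 (pmf Q ab / pmf QB (snd ab))))"

definition rate_region :: "(nat \<Rightarrow> 'a) pmf \<Rightarrow> nat \<Rightarrow> nat set \<Rightarrow> (nat \<Rightarrow> real) set" where
  "rate_region P m T =
     {R. \<forall>B. B \<subset> {1..m} \<and> B \<inter> T \<noteq> {} \<longrightarrow>
            (\<Sum>i\<in>B \<inter> T. R i) \<ge> cond_entropy P (B \<inter> T) ({1..m} - B)}"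

definition R_min :: "(nat \<Rightarrow> 'a) pmf \<Rightarrow> nat \<Rightarrow> nat set \<Rightarrow> real" where
  "R_min P m T = Inf ((\<lambda>R. \<Sum>i\<in>T. R i) ` rate_region P m T)"

end

theory Submission
  imports Defs
begin

theorem lemma7:
  fixes P :: "(nat \<Rightarrow> 'a) pmf" and m :: nat and T :: "nat set"
  assumes "finite (set_pmf P)"
    and "m \<ge> 3"
    and "T \<subseteq> {1..m}" and "card T = m - 1"
  shows "R_min P m T \<ge> (1 / (real m - 2)) * (\<Sum>j\<in>T. cond_entropy P (T - {j}) {j})"
proof -
  have finT: "finite T" using assms(3) finite_subset by blast
  define C where "C = (\<Sum>B\<in>Pow {1..m}. \<bar>cond_entropy P (B \<inter> T) ({1..m} - B)\<bar>)"
  have C0: "C \<ge> 0" unfolding C_def by (intro sum_nonneg) auto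
  have ne: "(\<lambda>i. C) \<in> rate_region P m T"
    unfolding rate_region_def
  proof (intro CollectI allI impI)
    fix B assume B: "B \<subset> {1..m} \<and> B \<inter> T \<noteq> {}"
    have "cond_entropy P (B \<inter> T) ({1..m} - B) \<le> \<bar>cond_entropy P (B \<inter> T) ({1..m} - B)\<bar>" by simp
    also have "\<dots> \<le> C" unfolding C_def
      by (rule member_le_sum[where f="\<lambda>B. \<bar>cond_entropy P (B \<inter> T) ({1..m} - B)\<bar>"]) (use B in auto)
    also have "C \<le> real (card (B \<inter> T)) * C"
    proof -
      have "card (B \<inter> T) \<ge> 1" using B finT by (simp add: Suc_le_eq card_gt_0_iff)
      then show ?thesis using C0 by (simp add: mult_le_cancel_right1)
    qed
    also have "\<dots> = (\<Sum>i\<in>B \<inter> T. C)" by simp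
    finally show "(\<Sum>i\<in>B \<inter> T. C) \<ge> cond_entropy P (B \<inter> T) ({1..m} - B)" .
  qed
  let ?H = "(\<Sum>j\<in>T. cond_entropy P (T - {j}) {j})"
  have bound: "(1 / (real m - 2)) * ?H \<le> (\<Sum>i\<in>T. R i)" if R: "R \<in> rate_region P m T" for R
  proof -
    have each: "cond_entropy P (T - {j}) {j} \<le> (\<Sum>i\<in>T. R i) - R j" if j: "j \<in> T" for j
    proof -
      let ?B = "{1..m} - {j}"
      have jm: "j \<in> {1..m}" using j assms(3) by auto
      have BT: "?B \<inter> T = T - {j}" using assms(3) by auto
      have cB: "{1..m} - ?B = {j}" using jm by auto
      have "card T \<ge> 2" using assms(2,4) by simp
      hence "card (T - {j}) \<ge> 1" using j finT by simp
      hence "T - {j} \<noteq> {}" by (metis card.empty not_one_le_zero)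
      moreover have "?B \<subset> {1..m}" using jm by blast
      ultimately have "?B \<subset> {1..m} \<and> ?B \<inter> T \<noteq> {}" using BT by simp
      hence "(\<Sum>i\<in>?B \<inter> T. R i) \<ge> cond_entropy P (?B \<inter> T) ({1..m} - ?B)"
        using R unfolding rate_region_def by blast
      thus ?thesis using BT cB sum_diff1[OF finT, of R j] j by simp
    qed
    have "?H \<le> (\<Sum>j\<in>T. (\<Sum>i\<in>T. R i) - R j)" by (rule sum_mono) (rule each)
    also have "\<dots> = real (card T) * (\<Sum>i\<in>T. R i) - (\<Sum>i\<in>T. R i)"
      by (simp add: sum_subtractf)
    also have "\<dots> = (real m - 2) * (\<Sum>i\<in>T. R i)"
      using assms(2,4) by (simp add: of_nat_diff algebra_simps)
    finally have "?H \<le> (real m - 2) * (\<Sum>i\<in>T. R i)" .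
    moreover have "real m - 2 > 0" using assms(2) by simp
    ultimately show ?thesis by (simp add: field_simps)
  qed
  show ?thesis unfolding R_min_def
    by (rule cInf_greatest) (use ne bound in auto)
qed

end
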